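(* Let $G=\{0,g_1,\dots,g_k\}$ be a finite abelian group (with $g_1,\dots,g_k$ its distinct nonzero elements) such that $g_1+\cdots+g_k=0$, and let $\beta$ be a bicharacter of $G$. Let $A$ be a $G$-graded $\beta$-commutative algebra with $A_0=K$, and suppose that the graded monomial $x_{1}^{(g_1)}x_{2}^{(g_2)}\cdots x_{k}^{(g_k)}$ is not a graded polynomial identity of $A$ (i.e. there exist $a_{j}\in A_{g_j}$ with $a_1\cdots a_k\neq 0$). Then $\dim A=|G|$ and $A$ is isomorphic, as a $G$-graded algebra, to a twisted group algebra $K^\alpha G$ for some 2-cocycle $\alpha$.
   Context: All algebras are associative with unit over an algebraically closed field $K$ of characteristic $0$; $G$ is a finite abelian group written additively. A bicharacter of $G$ is a map $\beta\colon G\times G\to K^*$ with $\beta(g,h)=\beta(h,g)^{-1}$, $\beta(g,h+k)=\beta(g,h)\beta(g,k)$, $\beta(g+k,h)=\beta(g,h)\beta(k,h)$. A $G$-graded algebra $C=\bigoplus_g C_g$ is $\beta$-commutative if $c_gc_h=\beta(g,h)c_hc_g$ for all $g,h\in G$, $c_g\in C_g$, $c_h\in C_h$. For a 2-cocycle $\alpha\colon G\times G\to K^*$, the twisted group algebra $K^\alpha G$ has basis $\{X_g\}_{g\in G}$ with $X_gX_h=\alpha(g,h)X_{g+h}$ and grading $(K^\alpha G)_g=KX_g$. Graded polynomial identities are taken in the free $G$-graded algebra on variables $x_i^{(g)}$ of homogeneous degree $g$. *)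

theory Defs
  imports Main "HOL-Computational_Algebra.Polynomial"
begin

definition alg_closed :: "'k::field itself \<Rightarrow> bool" where
  "alg_closed TYPE('k) \<longleftrightarrow> (\<forall>p :: 'k poly. degree p > 0 \<longrightarrow> (\<exists>x. poly p x = 0))"

definition K_algebra :: "('k::field \<Rightarrow> 'a::ring_1 \<Rightarrow> 'a) \<Rightarrow> bool" where
  "K_algebra scale \<longleftrightarrow> vector_space scale \<and>
     (\<forall>c x y. scale c (x * y) = scale c x * y \<and> scale c (x * y) = x * scale c y)"

definition graded_algebra ::
  "('k::field \<Rightarrow> 'a::ring_1 \<Rightarrow> 'a) \<Rightarrow> ('g::{finite,comm_monoid_add} \<Rightarrow> 'a set) \<Rightarrow> bool" where
  "graded_algebra scale Ag \<longleftrightarrow>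
     K_algebra scale \<and>
     (\<forall>g. module.subspace scale (Ag g)) \<and>
     (\<forall>a. \<exists>!c :: 'g \<Rightarrow> 'a. (\<forall>g. c g \<in> Ag g) \<and> a = (\<Sum>g\<in>UNIV. c g)) \<and>
     (\<forall>g h x y. x \<in> Ag g \<longrightarrow> y \<in> Ag h \<longrightarrow> x * y \<in> Ag (g + h))"

definition bicharacter :: "('g::ab_group_add \<Rightarrow> 'g \<Rightarrow> 'k::field) \<Rightarrow> bool" where
  "bicharacter \<beta> \<longleftrightarrow>
     (\<forall>g h. \<beta> g h \<noteq> 0) \<and>
     (\<forall>g h. \<beta> g h = inverse (\<beta> h g)) \<and>
     (\<forall>g h k. \<beta> g (h + k) = \<beta> g h * \<beta> g k) \<and>
     (\<forall>g h k. \<beta> (g + k) h = \<beta> g h * \<beta> k h)"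

definition beta_commutative ::
  "('k::field \<Rightarrow> 'a::ring_1 \<Rightarrow> 'a) \<Rightarrow> ('g \<Rightarrow> 'a set) \<Rightarrow> ('g \<Rightarrow> 'g \<Rightarrow> 'k) \<Rightarrow> bool" where
  "beta_commutative scale Ag \<beta> \<longleftrightarrow>
     (\<forall>g h x y. x \<in> Ag g \<longrightarrow> y \<in> Ag h \<longrightarrow> x * y = scale (\<beta> g h) (y * x))"

definition two_cocycle :: "('g::ab_group_add \<Rightarrow> 'g \<Rightarrow> 'k::field) \<Rightarrow> bool" where
  "two_cocycle \<alpha> \<longleftrightarrow>
     (\<forall>g h. \<alpha> g h \<noteq> 0) \<and>
     (\<forall>g h k. \<alpha> g h * \<alpha> (g + h) k = \<alpha> h k * \<alpha> g (h + k))"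

text \<open>Twisted group algebra K^alpha G, realised on coordinate functions G \<Rightarrow> K
  (f corresponds to \<Sum>g. f g X_g); X_g X_h = alpha g h X_(g+h).\<close>
definition tw_mult :: "('g::{finite,ab_group_add} \<Rightarrow> 'g \<Rightarrow> 'k::field) \<Rightarrow> ('g \<Rightarrow> 'k) \<Rightarrow> ('g \<Rightarrow> 'k) \<Rightarrow> ('g \<Rightarrow> 'k)" where
  "tw_mult \<alpha> f1 f2 = (\<lambda>k. \<Sum>g\<in>UNIV. \<alpha> g (k - g) * f1 g * f2 (k - g))"

definition tw_one :: "('g::{finite,ab_group_add} \<Rightarrow> 'g \<Rightarrow> 'k::field) \<Rightarrow> ('g \<Rightarrow> 'k)" where
  "tw_one \<alpha> = (\<lambda>g. if g = 0 then inverse (\<alpha> 0 0) else 0)"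

definition tw_component :: "'g \<Rightarrow> ('g \<Rightarrow> 'k::field) set" where
  "tw_component g = {f. \<forall>h. h \<noteq> g \<longrightarrow> f h = 0}"

definition graded_iso_twisted ::
  "('k::field \<Rightarrow> 'a::ring_1 \<Rightarrow> 'a) \<Rightarrow> ('g::{finite,ab_group_add} \<Rightarrow> 'a set) \<Rightarrow>
   ('g \<Rightarrow> 'g \<Rightarrow> 'k) \<Rightarrow> ('a \<Rightarrow> ('g \<Rightarrow> 'k)) \<Rightarrow> bool" where
  "graded_iso_twisted scale Ag \<alpha> \<phi> \<longleftrightarrow>
     bij \<phi> \<and>
     (\<forall>x y. \<phi> (x + y) = (\<lambda>g. \<phi> x g + \<phi> y g)) \<and>
     (\<forall>c x. \<phi> (scale c x) = (\<lambda>g. c * \<phi> x g)) \<and>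
     (\<forall>x y. \<phi> (x * y) = tw_mult \<alpha> (\<phi> x) (\<phi> y)) \<and>
     \<phi> 1 = tw_one \<alpha> \<and>
     (\<forall>g. \<phi> ` Ag g = tw_component g)"

end

theory Submission
  imports Defs
begin

locale grA =
  fixes scale :: "'k::field \<Rightarrow> 'a::ring_1 \<Rightarrow> 'a"
    and Ag :: "'g::{finite,ab_group_add} \<Rightarrow> 'a set"
  assumes graded: "graded_algebra scale Ag"
    and A0: "Ag 0 = range (\<lambda>c. scale c 1)"
begin

lemma vs: "vector_space scale" using graded unfolding graded_algebra_def K_algebra_def by blast

sublocale V: vector_space scale by (rule vs)

lemma Kalg: "K_algebra scale" using graded unfolding graded_algebra_def by blast

lemma scale_mult_left: "scale c x * y = scale c (x*y)"
  using Kalg unfolding K_algebra_def by simp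

lemma scale_mult_right: "x * scale c y = scale c (x*y)"
proof -
  have "scale c (x*y) = x * scale c y" using Kalg unfolding K_algebra_def by blast
  then show ?thesis by (rule sym)
qed

lemma sub: "V.subspace (Ag g)"
  using graded unfolding graded_algebra_def by blast

lemma mulAg: "x \<in> Ag g \<Longrightarrow> y \<in> Ag h \<Longrightarrow> x*y \<in> Ag (g+h)"
  using graded unfolding graded_algebra_def by blast

lemma dec: "\<forall>a. \<exists>!c::'g\<Rightarrow>'a. (\<forall>g. c g \<in> Ag g) \<and> a = (\<Sum>g\<in>UNIV. c g)"
  by (fact conjunct1[OF conjunct2[OF conjunct2[OF graded[unfolded graded_algebra_def]]]])

lemma decomp_unique:
  assumes c: "\<forall>g. c g \<in> Ag g" and d: "\<forall>g. d g \<in> Ag g" and s: "sum c UNIV = sum d UNIV"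
  shows "c = d"
proof -
  have "\<exists>!c::'g\<Rightarrow>'a. (\<forall>g. c g \<in> Ag g) \<and> sum d UNIV = (\<Sum>g\<in>UNIV. c g)"
    using dec by (rule spec)
  then obtain c0 where u: "\<forall>y. (\<forall>g. y g \<in> Ag g) \<and> sum d UNIV = (\<Sum>g\<in>UNIV. y g) \<longrightarrow> y = c0"
    by (elim ex1E) blast
  have "c = c0" using u c s by simp
  moreover have "d = c0" using u d by simp
  ultimately show ?thesis by simp
qed

lemma decomp_ex: "\<exists>c. (\<forall>g. c g \<in> Ag g) \<and> a = sum c UNIV"
proof -
  have "\<exists>!c::'g\<Rightarrow>'a. (\<forall>g. c g \<in> Ag g) \<and> a = (\<Sum>g\<in>UNIV. c g)"
    using dec by (rule spec)
  then show ?thesis by (rule ex1_implies_ex)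
qed

lemma one_in: "1 \<in> Ag 0"
proof -
  have "scale 1 1 \<in> Ag 0" using A0 by blast
  then show ?thesis by simp
qed

lemma prod_hom:
  "length xs = length ds \<Longrightarrow> (\<forall>i<length xs. xs!i \<in> Ag (ds!i)) \<Longrightarrow> prod_list xs \<in> Ag (sum_list ds)"
proof (induction xs arbitrary: ds)
  case Nil
  then show ?case using one_in by simp
next
  case (Cons x xs)
  then obtain d ds' where ds: "ds = d # ds'" by (cases ds) auto
  have "x \<in> Ag d" using Cons.prems(2)[rule_format, of 0] ds by simp
  moreover have "prod_list xs \<in> Ag (sum_list ds')"
  proof (rule Cons.IH)
    show "length xs = length ds'" using Cons.prems(1) ds by simp
    show "\<forall>i<length xs. xs!i \<in> Ag (ds'!i)"
    proof (intro allI impI)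
      fix i assume "i < length xs"
      then have "Suc i < length (x#xs)" by simp
      from Cons.prems(2)[rule_format, OF this] show "xs!i \<in> Ag (ds'!i)" using ds by simp
    qed
  qed
  ultimately show ?case using mulAg ds by simp
qed

lemma key:
  fixes as :: "'a list" and gs :: "'g list"
  assumes len: "length as = length gs"
    and hom: "\<forall>j<length gs. as!j \<in> Ag (gs!j)"
    and nz: "prod_list as \<noteq> 0"
    and gsum: "sum_list gs = 0"
    and j: "j < length gs"
    and bcomm: "\<forall>g h x y. x \<in> Ag g \<longrightarrow> y \<in> Ag h \<longrightarrow> x * y = scale (\<beta> g h) (y * x)"
    and bnz: "\<forall>g h. \<beta> g h \<noteq> 0"
  shows "(\<forall>x\<in>Ag (gs!j). \<exists>d. x = scale d (as!j)) \<and> (\<exists>b e. e\<noteq>0 \<and> b*(as!j) = scale e 1)"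
proof -
  define g where "g = gs!j"
  define a where "a = as!j"
  define L where "L = prod_list (take j as)"
  define R where "R = prod_list (drop (Suc j) as)"
  define l where "l = sum_list (take j gs)"
  define r where "r = sum_list (drop (Suc j) gs)"
  have ha: "a \<in> Ag g" using hom j a_def g_def by simp
  have hL: "L \<in> Ag l" unfolding L_def l_def
    by (rule prod_hom) (use len hom j in auto)
  have hR: "R \<in> Ag r" unfolding R_def r_def
    by (rule prod_hom) (use len hom j in auto)
  have jas: "j < length as" using len j by simp
  have pas: "prod_list as = L * a * R"
  proof -
    have "prod_list as = prod_list (take j as @ as!j # drop (Suc j) as)"
      by (subst id_take_nth_drop[OF jas, symmetric]) (rule refl)
    then show ?thesis unfolding L_def R_def a_def by (simp add: mult.assoc)
  qed
  have split: "l + g + r = 0"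
  proof -
    have "sum_list gs = sum_list (take j gs @ gs!j # drop (Suc j) gs)"
      by (subst id_take_nth_drop[OF j, symmetric]) (rule refl)
    then show ?thesis unfolding l_def r_def g_def using gsum by (simp add: add.assoc)
  qed
  have "prod_list as \<in> Ag 0" using prod_hom[of as gs] len hom gsum by simp
  then obtain c where c: "prod_list as = scale c 1" using A0 by auto
  have c0: "c \<noteq> 0" using nz c by auto
  have La: "L * a \<in> Ag (l+g)" using mulAg hL ha by blast
  define bb where "bb = \<beta> (l+g) r"
  have bb0: "bb \<noteq> 0" using bnz bb_def by simp
  have "(L * a) * R = scale bb (R * (L * a))"
    using bcomm La hR unfolding bb_def by blast
  then have "scale c 1 = scale bb (R * (L * a))" using c pas by simp
  then have "scale (inverse bb) (scale c 1) = R * (L * a)"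
    using bb0 by simp
  then have ba: "(R * L) * a = scale (inverse bb * c) 1"
    by (simp add: mult.assoc)
  define e where "e = inverse bb * c"
  have e0: "e \<noteq> 0" using bb0 c0 e_def by simp
  have hb: "R * L \<in> Ag (r + l)" using mulAg hR hL by blast
  have "\<forall>x\<in>Ag g. \<exists>d. x = scale d a"
  proof
    fix x assume x: "x \<in> Ag g"
    have "x * (R*L) \<in> Ag (g + (r + l))" using mulAg x hb by blast
    moreover have "g + (r + l) = 0" using split by (simp add: algebra_simps)
    ultimately obtain d where d: "x * (R*L) = scale d 1" using A0 by auto
    have "scale e x = x * ((R*L)*a)" using ba e_def scale_mult_right by simp
    also have "\<dots> = scale d a" using d by (simp add: mult.assoc[symmetric] scale_mult_left)
    finally have "scale (inverse e) (scale e x) = scale (inverse e) (scale d a)" by simp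
    then have "x = scale (inverse e * d) a" using e0 by simp
    then show "\<exists>d. x = scale d a" ..
  qed
  moreover have "\<exists>b e. e\<noteq>0 \<and> b*a = scale e 1"
    using ba e0 unfolding e_def by blast
  ultimately show ?thesis unfolding g_def a_def by blast
qed

end

locale grU = grA +
  fixes u
  assumes u_in: "u g \<in> Ag g"
    and u0: "u 0 = 1"
    and u_span: "x \<in> Ag g \<Longrightarrow> \<exists>d. x = scale d (u g)"
    and u_inv: "\<exists>b e. e \<noteq> 0 \<and> b * u g = scale e 1"
begin

lemma u_ne: "u g \<noteq> 0"
proof
  assume h: "u g = 0"
  obtain b e where be: "e \<noteq> 0" "b * u g = scale e 1" using u_inv by blast
  then have "scale e 1 = 0" using h by simp
  then show False using be(1) by simp
qed

lemma uu_ne: "u g * u h \<noteq> 0"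
proof
  assume h: "u g * u h = 0"
  obtain b e where be: "e \<noteq> 0" "b * u g = scale e 1" using u_inv by blast
  have "b * (u g * u h) = scale e (u h)"
    by (simp add: mult.assoc[symmetric] be scale_mult_left)
  then show False using h be u_ne by simp
qed

definition al where "al g h = (SOME d. u g * u h = scale d (u (g+h)))"

lemma al_eq: "u g * u h = scale (al g h) (u (g+h))"
proof -
  have "\<exists>d. u g * u h = scale d (u (g+h))" by (rule u_span[OF mulAg[OF u_in u_in]])
  then show ?thesis unfolding al_def by (rule someI_ex)
qed

lemma al_ne: "al g h \<noteq> 0"
  using al_eq[of g h] uu_ne[of g h] by auto

lemma al00: "al 0 0 = 1"
proof -
  have "scale (al 0 0) (u 0) = scale 1 (u 0)" using al_eq[of 0 0] u0 by simp
  then show ?thesis by (rule V.scale_right_imp_eq[OF u_ne])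
qed

lemma cocycle: "two_cocycle al"
  unfolding two_cocycle_def
proof (intro conjI allI)
  fix g h show "al g h \<noteq> 0" by (rule al_ne)
next
  fix g h k
  have e1: "(u g * u h) * u k = scale (al g h * al (g+h) k) (u (g+h+k))"
    by (simp add: al_eq scale_mult_left)
  have e2: "u g * (u h * u k) = scale (al h k * al g (h+k)) (u (g+h+k))"
    by (simp add: al_eq scale_mult_right add.assoc mult.commute)
  have "scale (al g h * al (g+h) k) (u (g+h+k)) = (u g * u h) * u k" by (rule e1[symmetric])
  also have "\<dots> = u g * (u h * u k)" by (rule mult.assoc)
  also have "\<dots> = scale (al h k * al g (h+k)) (u (g+h+k))" by (rule e2)
  finally show "al g h * al (g + h) k = al h k * al g (h + k)"
    by (rule V.scale_right_imp_eq[OF u_ne])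
qed

definition psi where
  "psi f = (\<Sum>g\<in>UNIV. scale (f g) (u g))"

lemma sc_in: "scale c (u g) \<in> Ag g"
  using V.subspace_scale[OF sub u_in] by blast

lemma psi_inj: "inj psi"
proof (rule injI)
  fix f1 f2 assume "psi f1 = psi f2"
  then have "(\<lambda>g. scale (f1 g) (u g)) = (\<lambda>g. scale (f2 g) (u g))"
    unfolding psi_def by (intro decomp_unique) (auto simp: sc_in)
  then show "f1 = f2" using u_ne by (auto simp: fun_eq_iff dest: fun_cong)
qed

lemma psi_surj: "surj psi"
proof -
  have "a \<in> range psi" for a
  proof -
    obtain c where c: "\<forall>g. c g \<in> Ag g" "a = sum c UNIV" using decomp_ex by blast
    have "\<forall>g. \<exists>d. c g = scale d (u g)" using c u_span by blast
    then obtain d where "\<forall>g. c g = scale (d g) (u g)" by metis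
    then have "a = psi d" unfolding psi_def using c by simp
    then show ?thesis by simp
  qed
  then show ?thesis by auto
qed

lemma psi_bij: "bij psi" using psi_inj psi_surj by (simp add: bij_def)

lemma psi_add: "psi (\<lambda>g. f1 g + f2 g) = psi f1 + psi f2"
  unfolding psi_def by (simp add: V.scale_left_distrib sum.distrib)

lemma psi_scale: "psi (\<lambda>g. c * f g) = scale c (psi f)"
  unfolding psi_def by (simp add: V.scale_sum_right)

lemma psi_mult: "psi (tw_mult al f1 f2) = psi f1 * psi f2"
proof -
  have "psi f1 * psi f2 = (\<Sum>g\<in>UNIV. \<Sum>h\<in>UNIV. scale (f1 g) (u g) * scale (f2 h) (u h))"
    unfolding psi_def by (rule sum_product)
  also have "\<dots> = (\<Sum>g\<in>UNIV. \<Sum>h\<in>UNIV. scale (al g h * f1 g * f2 h) (u (g+h)))"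
    by (simp add: scale_mult_left scale_mult_right al_eq mult.commute mult.left_commute)
  finally have 1: "psi f1 * psi f2 = \<dots>" .
  have "psi (tw_mult al f1 f2) = (\<Sum>k\<in>UNIV. \<Sum>g\<in>UNIV. scale (al g (k-g) * f1 g * f2 (k-g)) (u k))"
    unfolding psi_def tw_mult_def by (simp add: V.scale_sum_left)
  also have "\<dots> = (\<Sum>g\<in>UNIV. \<Sum>k\<in>UNIV. scale (al g (k-g) * f1 g * f2 (k-g)) (u k))"
    by (rule sum.swap)
  also have "\<dots> = (\<Sum>g\<in>UNIV. \<Sum>h\<in>UNIV. scale (al g h * f1 g * f2 h) (u (g+h)))"
  proof (rule sum.cong[OF refl])
    fix g
    show "(\<Sum>k\<in>UNIV. scale (al g (k-g) * f1 g * f2 (k-g)) (u k)) =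
          (\<Sum>h\<in>UNIV. scale (al g h * f1 g * f2 h) (u (g+h)))"
      by (rule sum.reindex_bij_witness[where i="\<lambda>h. g + h" and j="\<lambda>k. k - g"]) auto
  qed
  finally show ?thesis using 1 by simp
qed

lemma psi_one: "psi (tw_one al) = 1"
proof -
  have "psi (tw_one al) = (\<Sum>g\<in>UNIV. if g = 0 then u g else 0)"
    unfolding psi_def tw_one_def by (rule sum.cong) (auto simp: al00)
  also have "\<dots> = 1" using u0 by simp
  finally show ?thesis .
qed

lemma psi_single: "psi (\<lambda>h. if h = g then d else 0) = scale d (u g)"
proof -
  have "psi (\<lambda>h. if h = g then d else 0) = (\<Sum>h\<in>UNIV. if h = g then scale d (u g) else 0)"
    unfolding psi_def by (intro sum.cong) auto
  then show ?thesis by simp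
qed

lemma psi_comp: "psi ` tw_component g = Ag g"
proof
  show "psi ` tw_component g \<subseteq> Ag g"
  proof
    fix x assume "x \<in> psi ` tw_component g"
    then obtain f where f: "f \<in> tw_component g" "x = psi f" by blast
    have "f = (\<lambda>h. if h = g then f g else 0)" using f unfolding tw_component_def by auto
    then have "x = scale (f g) (u g)" using f psi_single by metis
    then show "x \<in> Ag g" using sc_in by simp
  qed
next
  show "Ag g \<subseteq> psi ` tw_component g"
  proof
    fix x assume "x \<in> Ag g"
    then obtain d where "x = scale d (u g)" using u_span by blast
    then have "x = psi (\<lambda>h. if h = g then d else 0)" using psi_single by simp
    moreover have "(\<lambda>h. if h = g then d else 0) \<in> tw_component g" unfolding tw_component_def by auto
    ultimately show "x \<in> psi ` tw_component g" by blast
  qed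
qed

lemma iso: "graded_iso_twisted scale Ag al (inv psi)"
  unfolding graded_iso_twisted_def
proof (intro conjI allI)
  show "bij (inv psi)" using psi_bij by (rule bij_imp_bij_inv)
next
  fix x y
  have "psi (\<lambda>g. inv psi x g + inv psi y g) = x + y"
    using psi_add psi_surj by (simp add: surj_f_inv_f)
  then show "inv psi (x + y) = (\<lambda>g. inv psi x g + inv psi y g)"
    by (subst (asm) eq_commute) (simp only: inv_f_f[OF psi_inj])
next
  fix c x
  have "psi (\<lambda>g. c * inv psi x g) = scale c x"
    using psi_scale psi_surj by (simp add: surj_f_inv_f)
  then show "inv psi (scale c x) = (\<lambda>g. c * inv psi x g)"
    by (subst (asm) eq_commute) (simp only: inv_f_f[OF psi_inj])
next
  fix x y
  have "psi (tw_mult al (inv psi x) (inv psi y)) = x * y"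
    using psi_mult psi_surj by (simp add: surj_f_inv_f)
  then show "inv psi (x * y) = tw_mult al (inv psi x) (inv psi y)"
    by (subst (asm) eq_commute) (simp only: inv_f_f[OF psi_inj])
next
  have "inv psi (psi (tw_one al)) = tw_one al" by (rule inv_f_f[OF psi_inj])
  then show "inv psi 1 = tw_one al" by (simp only: psi_one)
next
  fix g
  show "inv psi ` Ag g = tw_component g"
  proof -
    have "inv psi ` (psi ` tw_component g) = tw_component g" by (rule image_inv_f_f[OF psi_inj])
    then show ?thesis by (simp only: psi_comp)
  qed
qed

lemma u_inj: "inj u"
proof (rule injI)
  fix g h assume e: "u g = u h"
  show "g = h"
  proof (rule ccontr)
    assume gh: "g \<noteq> h"
    let ?c = "\<lambda>k. if k = g then u g else 0"
    let ?d = "\<lambda>k. if k = h then u g else 0"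
    have "\<forall>k. ?c k \<in> Ag k" using u_in V.subspace_0[OF sub] by auto
    moreover have "\<forall>k. ?d k \<in> Ag k" using u_in e V.subspace_0[OF sub] by auto
    moreover have "sum ?c UNIV = sum ?d UNIV" by simp
    ultimately have "?c = ?d" by (rule decomp_unique)
    from fun_cong[OF this, of g] have "u g = 0" using gh by simp
    then show False using u_ne by simp
  qed
qed

lemma basis: "finite (range u) \<and> \<not> V.dependent (range u) \<and> V.span (range u) = UNIV"
proof (intro conjI)
  show "finite (range u)" by simp
next
  show "V.span (range u) = UNIV"
  proof -
    have "a \<in> V.span (range u)" for a
    proof -
      obtain f where "a = psi f" using psi_surj by (metis surjD)
      then show ?thesis unfolding psi_def
        apply simp
        apply (rule V.span_sum)
        apply (rule V.span_scale)
        apply (rule V.span_base)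
        by simp
    qed
    then show ?thesis by auto
  qed
next
  show "\<not> V.dependent (range u)"
    unfolding V.dependent_explicit
  proof
    assume "\<exists>t c. finite t \<and> t \<subseteq> range u \<and> (\<Sum>v\<in>t. scale (c v) v) = 0 \<and> (\<exists>v\<in>t. c v \<noteq> 0)"
    then obtain t c v where t: "t \<subseteq> range u" "(\<Sum>v\<in>t. scale (c v) v) = 0" "v \<in> t" "c v \<noteq> 0"
      by blast
    define f where "f g = (if u g \<in> t then c (u g) else 0)" for g
    have "psi f = (\<Sum>g\<in>u -` t. scale (c (u g)) (u g))"
      unfolding psi_def f_def by (rule sum.mono_neutral_cong_right) auto
    also have "\<dots> = (\<Sum>w\<in>u ` (u -` t). scale (c w) w)"
    proof -
      have r: "(\<Sum>w\<in>u ` (u -` t). scale (c w) w) = (\<Sum>g\<in>u -` t. scale (c (u g)) (u g))"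
        by (rule sum.reindex_cong[where l=u]) (simp_all add: inj_on_subset[OF u_inj])
      show ?thesis by (rule r[symmetric])
    qed
    also have "u ` (u -` t) = t" using t(1) by auto
    finally have "psi f = psi (\<lambda>_. 0)" using t(2) unfolding psi_def by simp
    then have f0: "f = (\<lambda>_. 0)" using psi_inj by (simp add: inj_eq)
    obtain g where g: "v = u g" using t by auto
    have "f g = c v" using g t(3) unfolding f_def by simp
    then show False using f0 t(4) by simp
  qed
qed

end

theorem theorem4p2:
  fixes scale :: "'k::field_char_0 \<Rightarrow> 'a::ring_1 \<Rightarrow> 'a"
    and Ag :: "'g::{finite,ab_group_add} \<Rightarrow> 'a set"
    and \<beta> :: "'g \<Rightarrow> 'g \<Rightarrow> 'k"
    and gs :: "'g list"
  assumes K_closed: "alg_closed TYPE('k)"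
    and graded: "graded_algebra scale Ag"
    and bichar: "bicharacter \<beta>"
    and bcomm: "beta_commutative scale Ag \<beta>"
    and A0: "Ag 0 = range (\<lambda>c. scale c 1)"
    and gs_enum: "distinct gs" "set gs = UNIV - {0}"
    and gs_sum: "sum_list gs = 0"
    and non_PI: "\<exists>as :: 'a list. length as = length gs \<and>
                   (\<forall>j < length gs. as ! j \<in> Ag (gs ! j)) \<and> prod_list as \<noteq> 0"
  shows "(\<exists>B. finite B \<and> \<not> module.dependent scale B \<and>
              module.span scale B = UNIV \<and> card B = card (UNIV :: 'g set)) \<and>
         (\<exists>\<alpha> \<phi>. two_cocycle \<alpha> \<and> graded_iso_twisted scale Ag \<alpha> \<phi>)"
proof -
  interpret grA scale Ag using graded A0 by unfold_locales
  obtain as :: "'a list" where as: "length as = length gs"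
    "\<forall>j < length gs. as ! j \<in> Ag (gs ! j)" "prod_list as \<noteq> 0" using non_PI by blast
  have bc: "\<forall>g h x y. x \<in> Ag g \<longrightarrow> y \<in> Ag h \<longrightarrow> x * y = scale (\<beta> g h) (y * x)"
    using bcomm unfolding beta_commutative_def by blast
  have bnz: "\<forall>g h. \<beta> g h \<noteq> 0" using bichar unfolding bicharacter_def by blast
  define idx where "idx g = (THE j. j < length gs \<and> gs ! j = g)" for g
  have idx: "idx g < length gs \<and> gs ! idx g = g" if "g \<noteq> 0" for g
  proof -
    have "g \<in> set gs" using gs_enum(2) that by blast
    then have "\<exists>!j. j < length gs \<and> gs ! j = g" by (rule distinct_Ex1[OF gs_enum(1)])
    then show ?thesis unfolding idx_def by (rule theI')
  qed
  define u where "u g = (if g = 0 then 1 else as ! idx g)" for g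
  have K: "u g \<in> Ag g \<and> (\<forall>x\<in>Ag g. \<exists>d. x = scale d (u g)) \<and> (\<exists>b e. e\<noteq>0 \<and> b*(u g) = scale e 1)"
    if g0: "g \<noteq> 0" for g
  proof -
    have i1: "idx g < length gs" and i2: "gs ! idx g = g" using idx[OF g0] by blast+
    have ug: "u g = as ! idx g" unfolding u_def using g0 by simp
    have m: "as ! idx g \<in> Ag (gs ! idx g)" using as(2) i1 by blast
    have k: "(\<forall>x\<in>Ag (gs ! idx g). \<exists>d. x = scale d (as ! idx g)) \<and> (\<exists>b e. e\<noteq>0 \<and> b*(as ! idx g) = scale e 1)"
      by (rule key[OF as(1) as(2) as(3) gs_sum i1 bc bnz])
    show ?thesis using m k unfolding ug i2 by blast
  qed
  have U: "grU scale Ag u"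
  proof (unfold_locales)
    fix g show "u g \<in> Ag g"
    proof (cases "g = 0")
      case True then show ?thesis using one_in unfolding u_def by simp
    next
      case False then show ?thesis using K by blast
    qed
  next
    show "u 0 = 1" unfolding u_def by simp
  next
    fix x g assume x: "x \<in> Ag g"
    show "\<exists>d. x = scale d (u g)"
    proof (cases "g = 0")
      case True
      then obtain c where "x = scale c 1" using x A0 by blast
      then show ?thesis using True by (auto simp: u_def)
    next
      case False then show ?thesis using K x by blast
    qed
  next
    fix g
    show "\<exists>b e. e \<noteq> 0 \<and> b * u g = scale e 1"
    proof (cases "g = 0")
      case True then show ?thesis unfolding u_def
        by (intro exI[of _ 1] exI[of _ 1]) simp
    next
      case False then show ?thesis using K by blast
    qed
  qed
  interpret grU scale Ag u by (rule U)
  have "card (range u) = card (UNIV :: 'g set)" using u_inj by (simp add: card_image)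
  note bas = basis
  have B: "\<exists>B. finite B \<and> \<not> module.dependent scale B \<and> module.span scale B = UNIV \<and> card B = card (UNIV :: 'g set)"
  proof (intro exI[of _ "range u"] conjI)
    show "finite (range u)" using bas by (rule conjunct1)
    show "\<not> module.dependent scale (range u)" using bas by (rule conjunct1[OF conjunct2])
    show "module.span scale (range u) = UNIV" using bas by (rule conjunct2[OF conjunct2])
  qed fact
  have I: "\<exists>\<alpha> \<phi>. two_cocycle \<alpha> \<and> graded_iso_twisted scale Ag \<alpha> \<phi>"
    using cocycle iso by (intro exI conjI)
  show ?thesis using B I by (rule conjI)
qed

end
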